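(* There is $C_{\boldsymbol\tau,\boldsymbol\eta}>0$ such that for any $\phi\in W^\infty(\mathbb T^{2n})$ and any nonconstant zero-average $f,g\in W_0^\infty(\mathbb T^{2n})$ with $L_{\boldsymbol\eta}f-L_{\boldsymbol\tau}g=\phi$, there is a nonconstant $P\in W^\infty(\mathbb T^{2n})$ such that for all $s\ge0$: $\|g-L_{\boldsymbol\eta}P\|_s\le C_{\boldsymbol\tau,\boldsymbol\eta}\|\phi\|_{s+2\gamma}$, $\|f-L_{\boldsymbol\tau}P\|_s\le C_{\boldsymbol\tau,\boldsymbol\eta}\|\phi\|_{s+2\gamma}$, $\|P\|_s\le C_{\boldsymbol\tau,\boldsymbol\eta}(\|f\|_{s+2\gamma}+\|g\|_{s+2\gamma})$.
   Context: $\boldsymbol\tau=(\tau_1,\dots,\tau_n,0,\dots,0)$, $\boldsymbol\eta=(0,\dots,0,\eta_1,\dots,\eta_n)\in\mathbb R^{2n}$, $n\ge2$, with $\sum\tau_j\eta_j=0$, Diophantine: there are $c,\gamma>0$ with $|\boldsymbol\tau\cdot\mathbf m-p|>c|\mathbf m_1\cdot\mathbf m_1|^{-\gamma}$ if $\mathbf m_1\ne0$ and $|\boldsymbol\eta\cdot\mathbf m-p|>c|\mathbf m_2\cdot\mathbf m_2|^{-\gamma}$ if $\mathbf m_2\ne0$, for $\mathbf m=(\mathbf m_1,\mathbf m_2)\in\mathbb Z^n\times\mathbb Z^n$, $p\in\mathbb Z$. On $L^2(\mathbb T^{2n})$ write $f=\sum_{\mathbf m}f_{\mathbf m}e^{2\pi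 i\mathbf m\cdot(\mathbf x,\boldsymbol\xi)}$, $\|f\|_s^2=\sum_{\mathbf m}(1+4\pi^2\mathbf m\cdot\mathbf m)^s|f_{\mathbf m}|^2$, $W^\infty(\mathbb T^{2n})=\bigcap_sW^s$, $W^\infty_0$ its zero-average subspace. For $\boldsymbol\kappa\in\{\boldsymbol\tau,\boldsymbol\eta\}$, $L_{\boldsymbol\kappa}h(\mathbf x,\boldsymbol\xi)=h((\mathbf x,\boldsymbol\xi)+\boldsymbol\kappa)-h(\mathbf x,\boldsymbol\xi)$. *)

theory Defs
  imports "HOL-Analysis.Analysis"
begin

text \<open>Functions on the torus T^{2n} = T^n x T^n are represented by their Fourier
coefficients: h = sum_m h_m e^{2 pi i m.(x,xi)}, with frequency m = (m1,m2) in Z^n x Z^n.\<close>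

type_synonym 'n freq = "(int^'n) \<times> (int^'n)"
type_synonym 'n coeffs = "'n freq \<Rightarrow> complex"

definition sqn :: "int^'n::finite \<Rightarrow> real" where
  "sqn v = (\<Sum>j\<in>UNIV. (real_of_int (v $ j))^2)"

definition msq :: "'n::finite freq \<Rightarrow> real" where
  "msq m = sqn (fst m) + sqn (snd m)"

definition kdot :: "(real^'n::finite) \<times> (real^'n) \<Rightarrow> 'n freq \<Rightarrow> real" where
  "kdot k m = (\<Sum>j\<in>UNIV. fst k $ j * real_of_int (fst m $ j))
            + (\<Sum>j\<in>UNIV. snd k $ j * real_of_int (snd m $ j))"

definition sob_weight :: "real \<Rightarrow> 'n::finite freq \<Rightarrow> real" where
  "sob_weight s m = (1 + 4 * pi^2 * msq m) powr s"

definition sob_norm :: "real \<Rightarrow> 'n::finite coeffs \<Rightarrow> real" where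
  "sob_norm s h = sqrt (\<Sum>\<^sub>\<infinity>m. sob_weight s m * (cmod (h m))^2)"

definition in_W :: "real \<Rightarrow> 'n::finite coeffs \<Rightarrow> bool" where
  "in_W s h \<longleftrightarrow> (\<lambda>m. sob_weight s m * (cmod (h m))^2) summable_on UNIV"

definition W_inf :: "'n::finite coeffs \<Rightarrow> bool" where
  "W_inf h \<longleftrightarrow> (\<forall>s. in_W s h)"

definition W0_inf :: "'n::finite coeffs \<Rightarrow> bool" where
  "W0_inf h \<longleftrightarrow> W_inf h \<and> h 0 = 0"

definition nonconst :: "'n::finite coeffs \<Rightarrow> bool" where
  "nonconst h \<longleftrightarrow> (\<exists>m. m \<noteq> 0 \<and> h m \<noteq> 0)"

text \<open>L_kappa h = h(. + kappa) - h, on Fourier coefficients: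
  (L_kappa h)_m = (e^{2 pi i kappa.m} - 1) h_m\<close>
definition Lop :: "(real^'n::finite) \<times> (real^'n) \<Rightarrow> 'n coeffs \<Rightarrow> 'n coeffs" where
  "Lop k h = (\<lambda>m. (exp (2 * pi * \<i> * complex_of_real (kdot k m)) - 1) * h m)"

end

theory Submission
  imports Defs
begin

lemma sin_lower:
  fixes y :: real assumes "\<bar>y\<bar> \<le> 1/2"
  shows "\<bar>y\<bar> \<le> \<bar>sin (pi * y)\<bar>"
proof -
  define x where "x = pi * y"
  have xb: "\<bar>x\<bar> \<le> pi / 2" using assms pi_gt_zero unfolding x_def
    by (simp add: abs_mult)
  have f0: "(fact 3 :: real) = 6" by (simp add: numeral_3_eq_3)
  have f: "inverse (fact 3) * \<bar>x\<bar> ^ 3 = \<bar>x\<bar> ^ 3 / (6::real)"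
    unfolding f0 by (simp add: field_simps)
  have s: "(\<Sum>m<3. sin_coeff m * x ^ m) = x" by (simp add: sin_coeff_def numeral_3_eq_3)
  have M: "\<bar>sin x - x\<bar> \<le> \<bar>x\<bar> ^ 3 / 6"
    using Maclaurin_sin_bound[of x 3] unfolding s f .
  have "x^2 \<le> (pi/2)^2" using xb by (metis abs_ge_zero power2_abs power_mono)
  also have "\<dots> < 2^2" using pi_less_4 pi_gt_zero by (intro power_strict_mono) auto
  also have "\<dots> = 4" by simp
  finally have x2: "x^2 < 4" .
  have "\<bar>x\<bar> ^ 3 = \<bar>x\<bar> * \<bar>x\<bar>^2" by (simp add: numeral_3_eq_3 power2_eq_square)
  hence "\<bar>x\<bar> ^ 3 / 6 = \<bar>x\<bar> * x^2 / 6" by (simp add: power2_abs)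
  also have "\<dots> \<le> \<bar>x\<bar> * 4 / 6" using x2 by (intro divide_right_mono mult_left_mono) auto
  finally have "\<bar>sin x - x\<bar> \<le> \<bar>x\<bar> * 2 / 3" using M by simp
  hence "\<bar>x\<bar> / 3 \<le> \<bar>sin x\<bar>" by linarith
  moreover have "3 * \<bar>y\<bar> \<le> pi * \<bar>y\<bar>" using pi_gt3 by (intro mult_right_mono) auto
  hence "\<bar>y\<bar> \<le> \<bar>x\<bar> / 3" unfolding x_def by (simp add: abs_mult)
  ultimately show ?thesis unfolding x_def by linarith
qed

lemma exp_lower:
  fixes x :: real
  shows "2 * \<bar>x - of_int (round x)\<bar> \<le> cmod (exp (2 * pi * \<i> * complex_of_real x) - 1)"
proof -
  define y where "y = x - of_int (round x)"
  have yb: "\<bar>y\<bar> \<le> 1/2" unfolding y_def using of_int_round_ge[of x] of_int_round_le[of x] by linarith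
  have e1: "2 * pi * \<i> * complex_of_real x = \<i> * complex_of_real (2*pi*y) + \<i> * (of_int (round x) * (of_real pi * 2))"
    unfolding y_def by (simp add: algebra_simps)
  have "exp (2 * pi * \<i> * complex_of_real x) = exp (\<i> * complex_of_real (2*pi*y))"
    unfolding e1 by (rule exp_plus_2pin)
  hence "cmod (exp (2 * pi * \<i> * complex_of_real x) - 1) = 2 * \<bar>sin (pi * y)\<bar>"
    using dist_exp_i_1[of "2*pi*y"] by (simp add: mult.commute)
  with sin_lower[OF yb] show ?thesis unfolding y_def by simp
qed

lemma inv_bound:
  fixes x c S R \<gamma> :: real and w :: complex
  assumes c: "c > 0" and g: "\<gamma> \<ge> 0" and S: "S > 0" "S \<le> R"
    and dio: "\<forall>p::int. \<bar>x - of_int p\<bar> > c * S powr (- \<gamma>)"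
  shows "exp (2 * pi * \<i> * complex_of_real x) \<noteq> 1"
    and "cmod (w / (exp (2 * pi * \<i> * complex_of_real x) - 1))^2
          \<le> (1/(4*c^2)) * R powr (2*\<gamma>) * cmod w ^ 2"
proof -
  define E where "E = exp (2 * pi * \<i> * complex_of_real x) - 1"
  define d where "d = c * S powr (- \<gamma>)"
  have dpos: "d > 0" unfolding d_def using c S by simp
  have d1: "d < \<bar>x - of_int (round x)\<bar>" using dio unfolding d_def by blast
  have d2: "2 * \<bar>x - of_int (round x)\<bar> \<le> cmod E" using exp_lower[of x] unfolding E_def .
  have dE: "2 * d < cmod E" using d1 d2 by (smt (verit))
  thus "exp (2 * pi * \<i> * complex_of_real x) \<noteq> 1" using dpos unfolding E_def by auto
  have "cmod (w / E)^2 = cmod w ^ 2 / (cmod E)^2" by (simp add: norm_divide power_divide)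
  also have "\<dots> \<le> cmod w ^ 2 / (2*d)^2"
    using dE dpos by (intro divide_left_mono power_mono) (auto intro!: mult_pos_pos)
  also have "(2*d)^2 = 4 * c^2 * S powr (- 2*\<gamma>)"
    unfolding d_def using S by (simp add: power_mult_distrib powr_powr[symmetric] powr_realpow[symmetric] powr_powr mult.commute)
  also have "cmod w ^ 2 / (4 * c^2 * S powr (- 2*\<gamma>)) = (1/(4*c^2)) * S powr (2*\<gamma>) * cmod w ^ 2"
    using S c by (simp add: powr_minus field_simps)
  also have "\<dots> \<le> (1/(4*c^2)) * R powr (2*\<gamma>) * cmod w ^ 2"
    using S g c by (intro mult_right_mono mult_left_mono powr_mono2) auto
  finally show "cmod (w / (exp (2 * pi * \<i> * complex_of_real x) - 1))^2
          \<le> (1/(4*c^2)) * R powr (2*\<gamma>) * cmod w ^ 2" unfolding E_def .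
qed

lemma msq_nonneg: "msq (m::'n::finite freq) \<ge> 0"
  unfolding msq_def sqn_def by (intro add_nonneg_nonneg sum_nonneg) auto

lemma sob_cmp:
  fixes h u v :: "'n::finite coeffs" and K \<gamma> s :: real
  assumes u: "W_inf u" and v: "W_inf v" and K: "K \<ge> 0"
   and pt: "\<And>m. cmod (h m)^2 \<le> K * (1 + 4*pi^2*msq m) powr (2*\<gamma>) * (cmod (u m)^2 + cmod (v m)^2)"
  shows "in_W s h" and "sob_norm s h \<le> sqrt K * (sob_norm (s+2*\<gamma>) u + sob_norm (s+2*\<gamma>) v)"
proof -
  define a where "a m = sob_weight (s+2*\<gamma>) m * cmod (u m)^2" for m
  define b where "b m = sob_weight (s+2*\<gamma>) m * cmod (v m)^2" for m
  have Sa: "a summable_on UNIV" using u unfolding W_inf_def in_W_def a_def by blast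
  have Sb: "b summable_on UNIV" using v unfolding W_inf_def in_W_def b_def by blast
  have a0: "a m \<ge> 0" for m unfolding a_def sob_weight_def by simp
  have b0: "b m \<ge> 0" for m unfolding b_def sob_weight_def by simp
  have bnd: "sob_weight s m * cmod (h m)^2 \<le> K * (a m + b m)" for m
  proof -
    have pos: "1 + 4*pi^2*msq m > 0" using msq_nonneg[of m] by (smt (verit) mult_nonneg_nonneg zero_le_power2)
    have w: "sob_weight s m * (1 + 4*pi^2*msq m) powr (2*\<gamma>) = sob_weight (s+2*\<gamma>) m"
      unfolding sob_weight_def using pos by (simp add: powr_add)
    have "sob_weight s m * cmod (h m)^2 \<le> sob_weight s m * (K * (1 + 4*pi^2*msq m) powr (2*\<gamma>) * (cmod (u m)^2 + cmod (v m)^2))"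
      by (intro mult_left_mono pt) (simp add: sob_weight_def)
    also have "\<dots> = K * (a m + b m)" unfolding a_def b_def w[symmetric] by (simp add: algebra_simps)
    finally show ?thesis .
  qed
  have Sab: "(\<lambda>m. K * (a m + b m)) summable_on UNIV"
    by (intro summable_on_cmult_right summable_on_add Sa Sb)
  have Sh: "(\<lambda>m. sob_weight s m * cmod (h m)^2) summable_on UNIV"
    by (rule summable_on_comparison_test[OF Sab]) (use bnd in \<open>auto simp: sob_weight_def\<close>)
  thus "in_W s h" unfolding in_W_def .
  have "(\<Sum>\<^sub>\<infinity>m. sob_weight s m * cmod (h m)^2) \<le> (\<Sum>\<^sub>\<infinity>m. K * (a m + b m))"
    by (rule infsum_mono[OF Sh Sab bnd])
  also have "\<dots> = K * (infsum a UNIV + infsum b UNIV)"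
    by (simp add: infsum_cmult_right Sa Sb summable_on_add infsum_add)
  finally have I: "(\<Sum>\<^sub>\<infinity>m. sob_weight s m * cmod (h m)^2) \<le> K * (infsum a UNIV + infsum b UNIV)" .
  have A0: "infsum a UNIV \<ge> 0" and B0: "infsum b UNIV \<ge> 0" using a0 b0 by (auto intro: infsum_nonneg)
  have "sob_norm s h \<le> sqrt (K * (infsum a UNIV + infsum b UNIV))"
    unfolding sob_norm_def using I by simp
  also have "\<dots> = sqrt K * sqrt (infsum a UNIV + infsum b UNIV)" by (simp add: real_sqrt_mult)
  also have "\<dots> \<le> sqrt K * (sqrt (infsum a UNIV) + sqrt (infsum b UNIV))"
    using A0 B0 K by (intro mult_left_mono sqrt_add_le_add_sqrt) auto
  also have "\<dots> = sqrt K * (sob_norm (s+2*\<gamma>) u + sob_norm (s+2*\<gamma>) v)"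
    unfolding sob_norm_def a_def b_def by simp
  finally show "sob_norm s h \<le> sqrt K * (sob_norm (s+2*\<gamma>) u + sob_norm (s+2*\<gamma>) v)" .
qed

lemma W_inf_zero: "W_inf (\<lambda>m::'n::finite freq. 0)"
  unfolding W_inf_def in_W_def by simp

lemma sob_norm_zero: "sob_norm s (\<lambda>m::'n::finite freq. 0) = 0"
  unfolding sob_norm_def by simp

lemma sq_sum_le: "(x+y)^2 \<le> 2*x^2 + 2*(y::real)^2"
proof -
  have "0 \<le> (x-y)^2" by simp
  thus ?thesis unfolding power2_eq_square by (simp add: algebra_simps)
qed

lemma sqn_pos: "v \<noteq> 0 \<Longrightarrow> sqn (v::int^'n::finite) > 0"
proof -
  assume "v \<noteq> 0"
  then obtain j where j: "v $ j \<noteq> 0" by (metis vec_eq_iff zero_index)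
  show ?thesis unfolding sqn_def
    by (rule sum_pos2[of UNIV j]) (use j in auto)
qed

lemma sqn_nonneg: "sqn (v::int^'n::finite) \<ge> 0"
  unfolding sqn_def by (intro sum_nonneg) auto

lemma rho_ge: "msq (m::'n::finite freq) \<le> 1 + 4*pi^2*msq m"
proof -
  have "1 * 1 \<le> pi * pi" using pi_gt3 by (intro mult_mono) auto
  hence "1 \<le> pi^2" by (simp add: power2_eq_square)
  hence "1 \<le> 4*pi^2" by simp
  hence "msq m \<le> 4*pi^2 * msq m" using msq_nonneg[of m] mult_right_mono[of 1 "4*pi^2" "msq m"] by simp
  thus ?thesis by simp
qed

lemma sqn_fst_le: "sqn (fst m) \<le> 1 + 4*pi^2*msq (m::'n::finite freq)"
  using rho_ge[of m] sqn_nonneg[of "snd m"] unfolding msq_def by linarith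

lemma sqn_snd_le: "sqn (snd m) \<le> 1 + 4*pi^2*msq (m::'n::finite freq)"
  using rho_ge[of m] sqn_nonneg[of "fst m"] unfolding msq_def by linarith

lemma rho_powr_ge1: "\<gamma> \<ge> 0 \<Longrightarrow> 1 \<le> (1 + 4*pi^2*msq (m::'n::finite freq)) powr (2*\<gamma>)"
  using msq_nonneg[of m] by (intro ge_one_powr_ge_zero) auto

lemma kdot_t0: "fst m = 0 \<Longrightarrow> kdot (t, 0) (m::'n::finite freq) = 0"
  unfolding kdot_def by simp

theorem proposition2p2:
  fixes t e :: "real^'n::finite" and c \<gamma> :: real
  assumes n2: "CARD('n) \<ge> 2"
    and orth: "(\<Sum>j\<in>UNIV. t $ j * e $ j) = 0"
    and cpos: "c > 0" and gpos: "\<gamma> > 0"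
    and dio_tau: "\<forall>(m::'n freq) (p::int). fst m \<noteq> 0 \<longrightarrow>
        \<bar>kdot (t, 0) m - real_of_int p\<bar> > c * (sqn (fst m)) powr (- \<gamma>)"
    and dio_eta: "\<forall>(m::'n freq) (p::int). snd m \<noteq> 0 \<longrightarrow>
        \<bar>kdot (0, e) m - real_of_int p\<bar> > c * (sqn (snd m)) powr (- \<gamma>)"
  shows "\<exists>C>0. \<forall>(\<phi>::'n coeffs) f g.
     W_inf \<phi> \<and> W0_inf f \<and> W0_inf g \<and> nonconst f \<and> nonconst g \<and>
     Lop (0, e) f - Lop (t, 0) g = \<phi> \<longrightarrow>
     (\<exists>P. W_inf P \<and> nonconst P \<and>
        (\<forall>s\<ge>0. sob_norm s (g - Lop (0, e) P) \<le> C * sob_norm (s + 2 * \<gamma>) \<phi> \<and>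
                sob_norm s (f - Lop (t, 0) P) \<le> C * sob_norm (s + 2 * \<gamma>) \<phi> \<and>
                sob_norm s P \<le> C * (sob_norm (s + 2 * \<gamma>) f + sob_norm (s + 2 * \<gamma>) g)))"
proof -
  define K0 where "K0 = 1 / (4 * c^2)"
  define K where "K = 2 * K0 + 2"
  have K0pos: "K0 \<ge> 0" unfolding K0_def by simp
  have Kge: "K \<ge> 1" "K0 \<le> K" "2 * K0 \<le> K" "2 \<le> K" unfolding K_def using K0pos by auto
  define \<rho> :: "'n freq \<Rightarrow> real" where "\<rho> m = (1 + 4*pi^2*msq m) powr (2*\<gamma>)" for m
  have \<rho>1: "1 \<le> \<rho> m" for m unfolding \<rho>_def using rho_powr_ge1[of \<gamma> m] gpos by simp
  define Et where "Et m = exp (2 * pi * \<i> * complex_of_real (kdot (t, 0) m))" for m :: "'n freq"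
  define Ee where "Ee m = exp (2 * pi * \<i> * complex_of_real (kdot (0, e) m))" for m :: "'n freq"
  have Lt: "Lop (t, 0) h m = (Et m - 1) * h m" for h m unfolding Lop_def Et_def by simp
  have Le: "Lop (0, e) h m = (Ee m - 1) * h m" for h m unfolding Lop_def Ee_def by simp
  have Bt: "Et m \<noteq> 1 \<and> (\<forall>w. cmod (w / (Et m - 1))^2 \<le> K0 * \<rho> m * cmod w ^ 2)" if "fst m \<noteq> 0" for m
  proof -
    have d: "\<forall>p::int. \<bar>kdot (t, 0) m - of_int p\<bar> > c * sqn (fst m) powr (- \<gamma>)"
      using dio_tau that by blast
    show ?thesis using inv_bound[OF cpos _ sqn_pos[OF that] sqn_fst_le d] gpos
      unfolding Et_def K0_def \<rho>_def by auto
  qed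
  have Be: "Ee m \<noteq> 1 \<and> (\<forall>w. cmod (w / (Ee m - 1))^2 \<le> K0 * \<rho> m * cmod w ^ 2)" if "snd m \<noteq> 0" for m
  proof -
    have d: "\<forall>p::int. \<bar>kdot (0, e) m - of_int p\<bar> > c * sqn (snd m) powr (- \<gamma>)"
      using dio_eta that by blast
    show ?thesis using inv_bound[OF cpos _ sqn_pos[OF that] sqn_snd_le d] gpos
      unfolding Ee_def K0_def \<rho>_def by auto
  qed
  have Et1: "Et m = 1" if "fst m = 0" for m unfolding Et_def using kdot_t0[OF that] by simp
  show ?thesis
  proof (intro exI[of _ "sqrt K"] conjI allI impI)
    show "sqrt K > 0" using Kge by simp
    fix \<phi> f g :: "'n coeffs"
    assume H: "W_inf \<phi> \<and> W0_inf f \<and> W0_inf g \<and> nonconst f \<and> nonconst g \<and>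
     Lop (0, e) f - Lop (t, 0) g = \<phi>"
    hence Wphi: "W_inf \<phi>" and Wf: "W_inf f" and Wg: "W_inf g" and f0: "f 0 = 0" and g0: "g 0 = 0"
      and ncf: "nonconst f" and eq: "Lop (0, e) f - Lop (t, 0) g = \<phi>"
      unfolding W0_inf_def by auto
    have phim: "\<phi> m = (Ee m - 1) * f m - (Et m - 1) * g m" for m
      using fun_cong[OF eq, of m] by (simp add: Lt Le)
    define P :: "complex \<Rightarrow> 'n coeffs" where "P a m = (if fst m \<noteq> 0 then f m / (Et m - 1)
        else if snd m \<noteq> 0 then g m / (Ee m - 1) + a * f m else 0)" for a m
    have pts: "cmod ((g - Lop (0, e) (P a)) m)^2 \<le> K * \<rho> m * (cmod (\<phi> m)^2 + cmod 0 ^ 2)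
       \<and> cmod ((f - Lop (t, 0) (P a)) m)^2 \<le> K * \<rho> m * (cmod (\<phi> m)^2 + cmod 0 ^ 2)
       \<and> cmod (P a m)^2 \<le> K * \<rho> m * (cmod (f m)^2 + cmod (g m)^2)" if a1: "cmod a \<le> 1" for a m
    proof (cases "fst m \<noteq> 0")
      case True
      define D where "D = Et m - 1"
      have D0: "D \<noteq> 0" and bd: "\<And>w. cmod (w / D)^2 \<le> K0 * \<rho> m * cmod w ^ 2"
        using Bt[OF True] unfolding D_def by auto
      have Pm: "P a m = f m / D" unfolding P_def D_def using True by simp
      have e1: "(g - Lop (0, e) (P a)) m = - (\<phi> m / D)"
        using D0 unfolding phim D_def[symmetric] by (simp add: Pm Le D_def[symmetric] field_simps)
      have e2: "(f - Lop (t, 0) (P a)) m = 0"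
        using D0 by (simp add: Pm Lt D_def[symmetric])
      have r: "0 \<le> \<rho> m * cmod w ^ 2" for w using \<rho>1[of m] by simp
      have "K0 * (\<rho> m * cmod w ^ 2) \<le> K * (\<rho> m * cmod w ^ 2)" for w
        by (rule mult_right_mono[OF Kge(2) r])
      hence kk: "K0 * \<rho> m * cmod w ^ 2 \<le> K * \<rho> m * cmod w ^ 2" for w by (simp add: mult.assoc)
      have A: "cmod ((g - Lop (0, e) (P a)) m)^2 \<le> K * \<rho> m * (cmod (\<phi> m)^2 + cmod 0 ^ 2)"
        unfolding e1 norm_minus_cancel using bd[of "\<phi> m"] kk[of "\<phi> m"] by simp
      have B: "cmod ((f - Lop (t, 0) (P a)) m)^2 \<le> K * \<rho> m * (cmod (\<phi> m)^2 + cmod 0 ^ 2)"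
        unfolding e2 using mult_nonneg_nonneg[OF _ r[of "\<phi> m"], of K] Kge by (simp add: mult.assoc)
      have "cmod (P a m)^2 \<le> K * \<rho> m * cmod (f m)^2" unfolding Pm using bd[of "f m"] kk[of "f m"] by simp
      also have "\<dots> \<le> K * \<rho> m * (cmod (f m)^2 + cmod (g m)^2)"
        using Kge \<rho>1[of m] by (intro mult_left_mono) auto
      finally show ?thesis using A B by blast
    next
      case False
      hence fm: "fst m = 0" by simp
      show ?thesis
      proof (cases "snd m \<noteq> 0")
        case True
        define D where "D = Ee m - 1"
        have D0: "D \<noteq> 0" and bd: "\<And>w. cmod (w / D)^2 \<le> K0 * \<rho> m * cmod w ^ 2"
          using Be[OF True] unfolding D_def by auto
        have ph: "\<phi> m = D * f m" using phim[of m] Et1[OF fm] unfolding D_def by simp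
        have Pm: "P a m = g m / D + a * f m" unfolding P_def D_def using True fm by simp
        have e1: "(g - Lop (0, e) (P a)) m = - (a * \<phi> m)"
          using D0 unfolding ph by (simp add: Pm Le D_def[symmetric] field_simps)
        have e2: "(f - Lop (t, 0) (P a)) m = \<phi> m / D"
          using D0 unfolding ph by (simp add: Lt Et1[OF fm])
        have r: "0 \<le> \<rho> m * cmod w ^ 2" for w using \<rho>1[of m] by simp
        have "K0 * (\<rho> m * cmod w ^ 2) \<le> K * (\<rho> m * cmod w ^ 2)" for w
          by (rule mult_right_mono[OF Kge(2) r])
        hence kk: "K0 * \<rho> m * cmod w ^ 2 \<le> K * \<rho> m * cmod w ^ 2" for w by (simp add: mult.assoc)
        have "cmod (a * \<phi> m)^2 \<le> cmod (\<phi> m)^2"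
          using a1 by (simp add: norm_mult power_mult_distrib mult_left_le_one_le power_le_one)
        also have "\<dots> = 1 * 1 * cmod (\<phi> m)^2" by simp
        also have "\<dots> \<le> K * \<rho> m * cmod (\<phi> m)^2"
          using Kge \<rho>1[of m] by (intro mult_right_mono mult_mono) auto
        finally have A: "cmod ((g - Lop (0, e) (P a)) m)^2 \<le> K * \<rho> m * (cmod (\<phi> m)^2 + cmod 0 ^ 2)"
          unfolding e1 norm_minus_cancel by simp
        have B: "cmod ((f - Lop (t, 0) (P a)) m)^2 \<le> K * \<rho> m * (cmod (\<phi> m)^2 + cmod 0 ^ 2)"
          unfolding e2 using bd[of "\<phi> m"] kk[of "\<phi> m"] by simp
        have "cmod (P a m)^2 \<le> (cmod (g m / D) + cmod (a * f m))^2"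
          unfolding Pm by (intro power_mono norm_triangle_ineq) auto
        also have "\<dots> \<le> 2 * cmod (g m / D)^2 + 2 * cmod (a * f m)^2"
          by (rule sq_sum_le)
        also have "\<dots> \<le> 2 * (K0 * \<rho> m * cmod (g m)^2) + 2 * (\<rho> m * cmod (f m)^2)"
        proof -
          have "cmod (a * f m)^2 \<le> cmod (f m)^2"
            using a1 by (simp add: norm_mult power_mult_distrib mult_left_le_one_le power_le_one)
          also have "cmod (f m)^2 \<le> \<rho> m * cmod (f m)^2" using \<rho>1[of m] by (simp add: mult_le_cancel_right1)
          finally show ?thesis using bd[of "g m"] by linarith
        qed
        also have "\<dots> \<le> K * \<rho> m * (cmod (f m)^2 + cmod (g m)^2)"
        proof -
          have "2 * K0 * (\<rho> m * cmod (g m)^2) \<le> K * (\<rho> m * cmod (g m)^2)"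
            by (rule mult_right_mono[OF Kge(3) r])
          moreover have "2 * (\<rho> m * cmod (f m)^2) \<le> K * (\<rho> m * cmod (f m)^2)"
            by (rule mult_right_mono[OF Kge(4) r])
          ultimately show ?thesis by (simp add: algebra_simps)
        qed
        finally show ?thesis using A B by blast
      next
        case False
        hence m0: "m = 0" using fm by (simp add: prod_eq_iff)
        have Pm: "P a m = 0" unfolding P_def using m0 by simp
        show ?thesis using m0 Pm f0 g0 \<rho>1[of m] Kge by (simp add: Lt Le)
      qed
    qed
    have main: "W_inf (P a) \<and> (\<forall>s\<ge>0. sob_norm s (g - Lop (0, e) (P a)) \<le> sqrt K * sob_norm (s + 2 * \<gamma>) \<phi> \<and>
                sob_norm s (f - Lop (t, 0) (P a)) \<le> sqrt K * sob_norm (s + 2 * \<gamma>) \<phi> \<and>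
                sob_norm s (P a) \<le> sqrt K * (sob_norm (s + 2 * \<gamma>) f + sob_norm (s + 2 * \<gamma>) g))"
      if a1: "cmod a \<le> 1" for a
    proof -
      have K0': "K \<ge> 0" using Kge by simp
      have p1: "cmod ((g - Lop (0, e) (P a)) m)^2 \<le> K * (1 + 4*pi^2*msq m) powr (2*\<gamma>) * (cmod (\<phi> m)^2 + cmod ((\<lambda>m. 0::complex) m)^2)" for m
        using pts[OF a1, of m] unfolding \<rho>_def by simp
      have p2: "cmod ((f - Lop (t, 0) (P a)) m)^2 \<le> K * (1 + 4*pi^2*msq m) powr (2*\<gamma>) * (cmod (\<phi> m)^2 + cmod ((\<lambda>m. 0::complex) m)^2)" for m
        using pts[OF a1, of m] unfolding \<rho>_def by simp
      have p3: "cmod (P a m)^2 \<le> K * (1 + 4*pi^2*msq m) powr (2*\<gamma>) * (cmod (f m)^2 + cmod (g m)^2)" for m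
        using pts[OF a1, of m] unfolding \<rho>_def by simp
      show ?thesis
      proof (intro conjI allI impI)
        show "W_inf (P a)" unfolding W_inf_def using sob_cmp(1)[OF Wf Wg K0' p3] by blast
        fix s :: real
        show "sob_norm s (g - Lop (0, e) (P a)) \<le> sqrt K * sob_norm (s + 2 * \<gamma>) \<phi>"
          using sob_cmp(2)[OF Wphi W_inf_zero K0' p1, of s] by (simp add: sob_norm_zero fun_diff_def)
        show "sob_norm s (f - Lop (t, 0) (P a)) \<le> sqrt K * sob_norm (s + 2 * \<gamma>) \<phi>"
          using sob_cmp(2)[OF Wphi W_inf_zero K0' p2, of s] by (simp add: sob_norm_zero fun_diff_def)
        show "sob_norm s (P a) \<le> sqrt K * (sob_norm (s + 2 * \<gamma>) f + sob_norm (s + 2 * \<gamma>) g)"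
          using sob_cmp(2)[OF Wf Wg K0' p3, of s] .
      qed
    qed
    have nc: "\<exists>a. cmod a \<le> 1 \<and> nonconst (P a)"
    proof (cases "nonconst (P 0)")
      case True thus ?thesis by (intro exI[of _ 0]) simp
    next
      case False
      hence z: "\<And>m. m \<noteq> 0 \<Longrightarrow> P 0 m = 0" unfolding nonconst_def by blast
      obtain m where m: "m \<noteq> 0" "f m \<noteq> 0" using ncf unfolding nonconst_def by blast
      show ?thesis
      proof (cases "fst m \<noteq> 0")
        case True
        have "P 0 m = f m / (Et m - 1)" unfolding P_def using True by simp
        moreover have "Et m \<noteq> 1" using Bt[OF True] by blast
        ultimately have "P 0 m \<noteq> 0" using m by simp
        thus ?thesis using z[OF m(1)] by blast
      next
        case False
        hence "snd m \<noteq> 0" using m(1) by (simp add: prod_eq_iff)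
        hence "P 1 m = P 0 m + f m" unfolding P_def using False by simp
        hence "P 1 m \<noteq> 0" using z[OF m(1)] m(2) by simp
        hence "nonconst (P 1)" unfolding nonconst_def using m(1) by blast
        thus ?thesis by (intro exI[of _ 1]) simp
      qed
    qed
    then obtain a where "cmod a \<le> 1" "nonconst (P a)" by blast
    thus "\<exists>P. W_inf P \<and> nonconst P \<and>
        (\<forall>s\<ge>0. sob_norm s (g - Lop (0, e) P) \<le> sqrt K * sob_norm (s + 2 * \<gamma>) \<phi> \<and>
                sob_norm s (f - Lop (t, 0) P) \<le> sqrt K * sob_norm (s + 2 * \<gamma>) \<phi> \<and>
                sob_norm s P \<le> sqrt K * (sob_norm (s + 2 * \<gamma>) f + sob_norm (s + 2 * \<gamma>) g))"
      using main by blast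
  qed
qed

end
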